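(* Let $M=p_1^{n_1}\cdots p_K^{n_K}$ with distinct primes and $n_\nu\in\mathbb{N}$, let $A\oplus B=\mathbb{Z}_M$, and fix $i\in\{1,\dots,K\}$. Then the following are equivalent: (I) $\Phi_{p_i^{n_i}}(X)\mid A(X)$, and for every $m$ with $p_i^{n_i}\mid m\mid M$, $m\in\mathrm{Div}(A)$ implies $m/p_i\notin\mathrm{Div}(B)$; (II) for every $r\in R$, the tiling $A\oplus rB=\mathbb{Z}_M$ has uniform $(rB,A)$ splitting parity in the $p_i$ direction, i.e. every fiber $z*F_i$, $z\in\mathbb{Z}_M$, splits with parity $(rB,A)$ with respect to the tiling $A\oplus rB=\mathbb{Z}_M$; (III) for every $a\in A$, $b\in B$ and every $x\in a*F_i$, we have $A_{x,b}\subset\Pi(x,p_i^{n_i})$.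
   Context: $A\oplus B=\mathbb{Z}_M$ means every element of $\mathbb{Z}_M$ is uniquely $a+b$ with $a\in A$, $b\in B$. $A(X)=\sum_{a\in A}X^a$ ($A$ viewed in $\{0,\dots,M-1\}$), $\Phi_s$ the $s$-th cyclotomic polynomial. $(x,M)=\gcd(x,M)$; $\mathrm{Div}(A)=\{(a-a',M):a,a'\in A\}$. $R=\{r\in\mathbb{Z}_M:(r,M)=1\}$, $rB=\{rb:b\in B\}$. $\Pi(y,p_i^\alpha)=\{y'\in\mathbb{Z}_M:p_i^\alpha\mid y-y'\}$. $F_i=\{0,M/p_i,\dots,(p_i-1)M/p_i\}$, $x*F_i=\{x+f:f\in F_i\}$. For $x,y\in\mathbb{Z}_M$, $A_{x,y}=\{a\in A:(x-a,M)=(y-b',M)\text{ for some }b'\in B\}$. For a tiling $A\oplus C=\mathbb{Z}_M$ and $Z\subset\mathbb{Z}_M$, $\Sigma_A(Z)=\{a\in A:a+c\in Z\text{ for some }c\in C\}$, $\Sigma_C(Z)$ analogously. A fiber $Z=z*F_i$ splits with parity $(C,A)$ if $p_i^{n_i}\mid c-c'$ for all $c,c'\in\Sigma_C(Z)$ and, for all distinct $a,a'\in\Sigma_A(Z)$, $p_i^{n_i-1}\mid a-a'$ but $p_i^{n_i}\nmid a-a'$. *)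

theory Defs
  imports Complex_Main "HOL-Computational_Algebra.Polynomial" "HOL-Computational_Algebra.Primes"
begin

text \<open>Z_M is represented by the integers {0..<M}; all arithmetic is taken mod M.\<close>

definition ZM :: "int \<Rightarrow> int set" where
  "ZM M = {0..<M}"

definition tiling :: "int \<Rightarrow> int set \<Rightarrow> int set \<Rightarrow> bool" where
  "tiling M A C \<longleftrightarrow> A \<subseteq> ZM M \<and> C \<subseteq> ZM M \<and>
     (\<forall>x\<in>ZM M. \<exists>!ac. fst ac \<in> A \<and> snd ac \<in> C \<and> (fst ac + snd ac) mod M = x)"

definition mask_poly :: "int set \<Rightarrow> complex poly" where
  "mask_poly A = (\<Sum>a\<in>A. monom 1 (nat a))"

definition cyclotomic :: "nat \<Rightarrow> complex poly" where
  "cyclotomic s = (\<Prod>k\<in>{k. k < s \<and> coprime k s}. [:- cis (2 * pi * real k / real s), 1:])"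

definition Div :: "int \<Rightarrow> int set \<Rightarrow> int set" where
  "Div M A = {gcd (a - a') M | a a'. a \<in> A \<and> a' \<in> A}"

definition units_ZM :: "int \<Rightarrow> int set" where
  "units_ZM M = {r \<in> ZM M. coprime r M}"

definition dil :: "int \<Rightarrow> int \<Rightarrow> int set \<Rightarrow> int set" where
  "dil M r B = {(r * b) mod M | b. b \<in> B}"

definition Pi_plane :: "int \<Rightarrow> int \<Rightarrow> int \<Rightarrow> int set" where
  "Pi_plane M y q = {y' \<in> ZM M. q dvd y - y'}"

definition fiber_set :: "int \<Rightarrow> int \<Rightarrow> int set" where
  "fiber_set M p = {k * (M div p) | k. 0 \<le> k \<and> k < p}"

definition fiber :: "int \<Rightarrow> int \<Rightarrow> int \<Rightarrow> int set" where
  "fiber M p x = {(x + f) mod M | f. f \<in> fiber_set M p}"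

definition A_xy :: "int \<Rightarrow> int set \<Rightarrow> int set \<Rightarrow> int \<Rightarrow> int \<Rightarrow> int set" where
  "A_xy M A B x y = {a \<in> A. \<exists>b'\<in>B. gcd (x - a) M = gcd (y - b') M}"

definition Sigma_set :: "int \<Rightarrow> int set \<Rightarrow> int set \<Rightarrow> int set \<Rightarrow> int set" where
  "Sigma_set M A C Z = {a \<in> A. \<exists>c\<in>C. (a + c) mod M \<in> Z}"

definition splits_parity :: "int \<Rightarrow> int \<Rightarrow> nat \<Rightarrow> int set \<Rightarrow> int set \<Rightarrow> int set \<Rightarrow> bool" where
  "splits_parity M p n C A Z \<longleftrightarrow>
     (\<forall>c\<in>Sigma_set M C A Z. \<forall>c'\<in>Sigma_set M C A Z. p ^ n dvd c - c') \<and>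
     (\<forall>a\<in>Sigma_set M A C Z. \<forall>a'\<in>Sigma_set M A C Z. a \<noteq> a' \<longrightarrow>
         p ^ (n - 1) dvd a - a' \<and> \<not> p ^ n dvd a - a')"

end

theory Submission
  imports Defs "HOL-Number_Theory.Cong"
begin

lemma coprime_by_primes:
  fixes s M :: int
  assumes "M \<noteq> 0" "\<And>l. prime l \<Longrightarrow> l dvd s \<Longrightarrow> l dvd M \<Longrightarrow> False"
  shows "coprime s M"
proof (rule ccontr)
  assume nc: "\<not> coprime s M"
  have "gcd s M \<noteq> 0" using assms(1) by simp
  moreover have "\<not> is_unit (gcd s M)" using nc by (simp add: coprime_iff_gcd_eq_1 is_unit_gcd)
  ultimately obtain l where "l dvd gcd s M" "prime l" using prime_divisor_exists by blast
  then show False using assms(2) by auto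
qed

lemma lift_unit:
  fixes N M s0 :: int
  assumes M: "M > 0" and NM: "N dvd M" and cop: "coprime s0 N"
  shows "\<exists>s. [s = s0] (mod N) \<and> coprime s M"
proof -
  define P where "P = {l \<in> prime_factors M. \<not> l dvd s0}"
  define t where "t = \<Prod>P"
  define s where "s = s0 + N * t"
  have finP: "finite P" unfolding P_def by auto
  have "coprime s M"
  proof (rule coprime_by_primes)
    show "M \<noteq> 0" using M by simp
    fix l :: int assume l: "prime l" "l dvd s" "l dvd M"
    show False
    proof (cases "l dvd s0")
      case True
      then have "l dvd N * t" using l(2) unfolding s_def by (simp add: dvd_add_right_iff)
      then have "l dvd N \<or> l dvd t" using l(1) prime_dvd_mult_iff by blast
      moreover have "\<not> l dvd N"
        using True cop l(1) by (meson coprime_common_divisor not_prime_unit)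
      moreover have "\<not> l dvd t"
      proof
        assume "l dvd t"
        then obtain x where x: "x \<in> P" "l dvd x" using prime_dvd_prod_iff[OF finP l(1)] t_def by auto
        then have "prime x" unfolding P_def by auto
        then have "l = x" using x(2) l(1) by (simp add: primes_dvd_imp_eq)
        then show False using x True unfolding P_def by auto
      qed
      ultimately show False by blast
    next
      case False
      have "l \<in> P" unfolding P_def using False l M by (auto simp: in_prime_factors_iff)
      then have "l dvd t" unfolding t_def using finP dvd_prodI[of P l id] by simp
      then have "l dvd N * t" by simp
      then have "l dvd s0" using l(2) unfolding s_def by (simp add: dvd_add_left_iff)
      then show False using False by simp
    qed
  qed
  moreover have "[s = s0] (mod N)" unfolding s_def by (simp add: cong_iff_dvd_diff)
  ultimately show ?thesis by blast
qed

lemma gcd_eq_unit_mult: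
  fixes x y M :: int
  assumes M: "M > 0" and g: "gcd x M = gcd y M"
  shows "\<exists>s. coprime s M \<and> M dvd (y - s * x)"
proof -
  define d where "d = gcd x M"
  have dpos: "d > 0" using M unfolding d_def by simp
  obtain x' where x': "x = d * x'" unfolding d_def by (meson gcd_dvd1 dvdE)
  obtain y' where y': "y = d * y'" using g unfolding d_def by (metis gcd_dvd1 dvdE)
  obtain N where N: "M = d * N" unfolding d_def by (meson gcd_dvd2 dvdE)
  have "gcd x M = d * gcd x' N" using x' N dpos by (simp add: gcd_mult_left)
  then have "d * gcd x' N = d * 1" unfolding d_def by simp
  then have cx: "coprime x' N" using dpos by (simp add: coprime_iff_gcd_eq_1)
  have "gcd y M = d * gcd y' N" using y' N dpos by (simp add: gcd_mult_left)
  then have "d * gcd y' N = d * 1" using g unfolding d_def by simp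
  then have cy: "coprime y' N" using dpos by (simp add: coprime_iff_gcd_eq_1)
  obtain i where i: "[x' * i = 1] (mod N)" using cong_solve_coprime_int[OF cx] by blast
  have ci: "coprime i N" using i
    by (metis cong_imp_coprime cong_sym coprime_1_left coprime_mult_left_iff)
  have c0: "coprime (i * y') N" using ci cy by simp
  obtain s where s: "[s = i * y'] (mod N)" "coprime s M"
    using lift_unit[OF M _ c0] N by auto
  have "[s * x' = i * y' * x'] (mod N)" using s(1) by (simp add: cong_mult)
  moreover have "[i * y' * x' = y'] (mod N)"
  proof -
    have "[y' * (x' * i) = y' * 1] (mod N)" using i cong_mult[OF cong_refl[of y'] i] by blast
    then show ?thesis by (simp add: mult.commute mult.left_commute)
  qed
  ultimately have "[s * x' = y'] (mod N)" using cong_trans by blast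
  then have "N dvd y' - s * x'" by (simp add: cong_iff_dvd_diff dvd_diff_commute)
  then have "d * N dvd d * (y' - s * x')" by simp
  then have "M dvd y - s * x" using N x' y' by (simp add: algebra_simps)
  then show ?thesis using s(2) by blast
qed

abbreviation XX :: "int poly" where "XX \<equiv> [:0, 1:]"

lemma XXpow: "XX ^ n = monom 1 n"
  by (simp add: monom_altdef)

definition SS :: "nat \<Rightarrow> int poly" where "SS m = (\<Sum>k<m. XX ^ k)"

definition idl :: "int \<Rightarrow> nat \<Rightarrow> int poly \<Rightarrow> bool" where
  "idl l m P \<longleftrightarrow> (\<exists>R1 R2. P = smult l R1 + (XX ^ m - 1) * R2)"

lemma idl_add: "idl l m P \<Longrightarrow> idl l m Q \<Longrightarrow> idl l m (P + Q)"
  unfolding idl_def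
proof (elim exE)
  fix R1 R2 R1' R2' assume "P = smult l R1 + (XX ^ m - 1) * R2" "Q = smult l R1' + (XX ^ m - 1) * R2'"
  then have "P + Q = smult l (R1 + R1') + (XX ^ m - 1) * (R2 + R2')" by (simp add: algebra_simps smult_add_right)
  then show "\<exists>R1 R2. P + Q = smult l R1 + (XX ^ m - 1) * R2" by blast
qed

lemma idl_uminus: "idl l m P \<Longrightarrow> idl l m (- P)"
  unfolding idl_def
proof (elim exE)
  fix R1 R2 assume "P = smult l R1 + (XX ^ m - 1) * R2"
  then have "- P = smult l (- R1) + (XX ^ m - 1) * (- R2)" by simp
  then show "\<exists>R1 R2. - P = smult l R1 + (XX ^ m - 1) * R2" by blast
qed

lemma idl_diff: "idl l m P \<Longrightarrow> idl l m Q \<Longrightarrow> idl l m (P - Q)"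
  using idl_add[of l m P "- Q"] idl_uminus by simp

lemma idl_mult: "idl l m P \<Longrightarrow> idl l m (P * Q)"
  unfolding idl_def
proof (elim exE)
  fix R1 R2 assume h: "P = smult l R1 + (XX ^ m - 1) * R2"
  have "P * Q = (smult l R1 + (XX ^ m - 1) * R2) * Q" using h by simp
  also have "\<dots> = smult l (R1 * Q) + (XX ^ m - 1) * (R2 * Q)" by (simp add: algebra_simps)
  finally have "P * Q = smult l (R1 * Q) + (XX ^ m - 1) * (R2 * Q)" .
  then show "\<exists>R1 R2. P * Q = smult l R1 + (XX ^ m - 1) * R2" by blast
qed

lemma idl_smult: "idl l m (smult l R)"
  unfolding idl_def by (rule exI[of _ R], rule exI[of _ 0], simp)

lemma idl_Z: "(XX ^ m - 1) dvd P \<Longrightarrow> idl l m P"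
  unfolding idl_def by (elim dvdE, rule exI[of _ 0], auto)

lemma idl_low:
  assumes "idl l m P" "m > 0" "\<And>j. j \<ge> m \<Longrightarrow> coeff P j = 0"
  shows "l dvd coeff P j"
proof -
  obtain R1 R2 where P: "P = smult l R1 + (XX ^ m - 1) * R2" using assms(1) unfolding idl_def by blast
  have P': "P = smult l R1 + monom 1 m * R2 - R2" using P by (simp add: monom_altdef algebra_simps)
  have cP: "coeff P j = l * coeff R1 j + (if j < m then 0 else coeff R2 (j - m)) - coeff R2 j" for j
    using P' by (simp add: coeff_monom_mult)
  have R2: "l dvd coeff R2 i" for i
  proof (induction i rule: measure_induct_rule[where f="\<lambda>i. degree R2 - i"])
    case (less i)
    show ?case
    proof (cases "i > degree R2")
      case True then show ?thesis by (simp add: coeff_eq_0)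
    next
      case False
      have "l dvd coeff R2 (i + m)"
      proof (cases "i + m > degree R2")
        case True then show ?thesis by (simp add: coeff_eq_0)
      next
        case False
        then show ?thesis using less[of "i + m"] assms(2) by simp
      qed
      moreover have "coeff P (i + m) = 0" using assms(3) by simp
      then have "coeff R2 i = coeff R2 (i + m) - l * coeff R1 (i + m)" using cP[of "i + m"] by simp
      ultimately show ?thesis by simp
    qed
  qed
  show ?thesis
  proof (cases "j < m")
    case True
    then show ?thesis using cP[of j] R2[of j] by simp
  next
    case False then show ?thesis using assms(3) by simp
  qed
qed

lemma Z_eq: "XX ^ m - 1 = (XX - 1) * SS m"
  unfolding SS_def by (rule power_diff_1_eq)

lemma Z_dvd_XS: "(XX ^ m - 1) dvd (XX * SS m - SS m)"
proof -
  have "XX * SS m - SS m = (XX - 1) * SS m" by (simp add: algebra_simps)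
  then show ?thesis using Z_eq by simp
qed

lemma Z_dvd_mult_S: "(XX ^ m - 1) dvd (SS m * Q - smult (poly Q 1) (SS m))"
proof (induction Q)
  case 0 then show ?case by simp
next
  case (pCons c Q)
  have e: "SS m * pCons c Q = smult c (SS m) + XX * (SS m * Q)"
    by (simp add: mult_pCons_right)
  have "SS m * pCons c Q - smult (poly (pCons c Q) 1) (SS m)
      = XX * (SS m * Q - smult (poly Q 1) (SS m)) + smult (poly Q 1) (XX * SS m - SS m)"
    unfolding e by (simp add: algebra_simps smult_add_left smult_diff_right del: mult_pCons_left mult_pCons_right)
  then show ?case using pCons(2)
    by (metis Z_dvd_XS dvd_add dvd_mult dvd_smult)
qed

lemma Z_dvd_pow_mod:
  assumes "m > 0"
  shows "(XX ^ m - 1) dvd (XX ^ n - XX ^ (n mod m))"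
proof -
  have "XX ^ n = XX ^ (n mod m) * (XX ^ m) ^ (n div m)"
    by (metis mod_mult_div_eq power_add power_mult mult.commute)
  then have "XX ^ n - XX ^ (n mod m) = XX ^ (n mod m) * ((XX ^ m) ^ (n div m) - 1)"
    by (simp add: algebra_simps)
  moreover have "(XX ^ m - 1) dvd ((XX ^ m) ^ (n div m) - 1)"
    by (simp add: power_diff_1_eq)
  ultimately show ?thesis by simp
qed

lemma frob2:
  assumes "prime L"
  shows "\<exists>R. (P + Q :: int poly) ^ L - P ^ L - Q ^ L = smult (int L) R"
proof -
  have L1: "L \<ge> 1" using assms prime_gt_0_nat by (simp add: Suc_leI)
  define f where "f k = of_nat (L choose k) * P ^ k * Q ^ (L - k)" for k
  define R where "R = (\<Sum>k\<in>{1..<L}. of_nat ((L choose k) div L) * P ^ k * Q ^ (L - k))"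
  have set: "{..L} = insert 0 (insert L {1..<L})" using L1 by auto
  have "(P + Q) ^ L = sum f {..L}" unfolding f_def by (rule binomial_ring)
  also have "\<dots> = f 0 + (f L + sum f {1..<L})"
    unfolding set using L1 by (subst sum.insert, auto)+
  also have "f 0 = Q ^ L" unfolding f_def by simp
  also have "f L = P ^ L" unfolding f_def by simp
  also have "sum f {1..<L} = of_nat L * R"
    unfolding R_def sum_distrib_left
  proof (rule sum.cong[OF refl])
    fix k assume k: "k \<in> {1..<L}"
    have "L dvd (L choose k)" using k assms by (intro dvd_choose_prime) auto
    then have "L choose k = L * ((L choose k) div L)" by simp
    then have "(of_nat (L choose k) :: int poly) = of_nat L * of_nat ((L choose k) div L)"
      by (metis of_nat_mult)
    then show "f k = of_nat L * (of_nat ((L choose k) div L) * P ^ k * Q ^ (L - k))"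
      unfolding f_def by (simp add: mult.assoc)
  qed
  also have "of_nat L * R = smult (int L) R" by (simp add: of_nat_mult_conv_smult)
  finally show ?thesis by (intro exI[of _ R]) (simp add: algebra_simps)
qed

lemma frob_sum:
  assumes "prime L" "finite B"
  shows "\<exists>R. (\<Sum>b\<in>B. XX ^ e b) ^ L - (\<Sum>b\<in>B. XX ^ (L * e b)) = smult (int L) R"
  using assms(2)
proof (induction B rule: finite_induct)
  case empty
  have "L > 0" using assms(1) prime_gt_0_nat by blast
  then show ?case by (intro exI[of _ 0]) simp
next
  case (insert b B)
  obtain R where R: "(\<Sum>b\<in>B. XX ^ e b) ^ L - (\<Sum>b\<in>B. XX ^ (L * e b)) = smult (int L) R"
    using insert by blast
  obtain R' where R': "(XX ^ e b + (\<Sum>b\<in>B. XX ^ e b)) ^ L - (XX ^ e b) ^ L - (\<Sum>b\<in>B. XX ^ e b) ^ L = smult (int L) R'"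
    using frob2[OF assms(1)] by blast
  have "(XX ^ e b) ^ L = XX ^ (L * e b)" by (simp add: power_mult[symmetric] mult.commute)
  then have "(\<Sum>b\<in>insert b B. XX ^ e b) ^ L - (\<Sum>b\<in>insert b B. XX ^ (L * e b)) = smult (int L) (R + R')"
    using insert(1,2) R R' by (simp add: smult_add_right algebra_simps)
  then show ?case by blast
qed

lemma sum_pow_group:
  assumes "finite S" "\<And>s. s \<in> S \<Longrightarrow> v s < m"
  shows "(\<Sum>s\<in>S. XX ^ v s) = (\<Sum>y<m. of_nat (card {s\<in>S. v s = y}) * XX ^ y)"
proof -
  have "(\<Sum>s\<in>S. XX ^ v s) = (\<Sum>y\<in>{..<m}. \<Sum>s\<in>{s\<in>S. v s = y}. XX ^ v s)"
    using assms by (intro sum.group[symmetric]) auto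
  also have "\<dots> = (\<Sum>y<m. of_nat (card {s\<in>S. v s = y}) * XX ^ y)"
    by (intro sum.cong refl) simp
  finally show ?thesis .
qed

lemma card_group:
  fixes m :: nat
  assumes "finite S" "\<And>s. s \<in> S \<Longrightarrow> v s < m"
  shows "card S = (\<Sum>y<m. card {s\<in>S. v s = y})"
proof -
  have "card S = (\<Sum>s\<in>S. (1::nat))" by simp
  also have "\<dots> = (\<Sum>y\<in>{..<m}. \<Sum>s\<in>{s\<in>S. v s = y}. (1::nat))"
    using assms by (intro sum.group[symmetric]) auto
  finally show ?thesis by simp
qed

lemma tij_step:
  fixes M l s :: int and A B :: "int set"
  assumes M: "M > 0" and A: "A \<subseteq> {0..<M}" and B: "finite B" and l: "prime l" and cl: "coprime l M"
    and T: "\<forall>x\<in>{0..<M}. card {(a,b)\<in>A\<times>B. (a + s*b) mod M = x} = 1"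
  shows "\<forall>x\<in>{0..<M}. card {(a,b)\<in>A\<times>B. (a + (l*s)*b) mod M = x} = 1"
proof -
  define m where "m = nat M"
  define L where "L = nat l"
  have l0: "l > 1" using l prime_gt_1_int by blast
  have lL: "l = int L" unfolding L_def using l0 by simp
  have L: "prime L" using l lL prime_nat_int_transfer by metis
  have L1: "L \<ge> 1" using l0 lL by simp
  have m0: "m > 0" unfolding m_def using M by simp
  have finA: "finite A" using A finite_subset by blast
  have finAB: "finite (A \<times> B)" using finA B by simp
  define v where "v t = (\<lambda>(a,b). nat ((a + t*b) mod M))" for t
  define N where "N t y = card {ab \<in> A\<times>B. v t ab = y}" for t y
  define PA where "PA = (\<Sum>a\<in>A. XX ^ nat a)"
  define PB where "PB t = (\<Sum>b\<in>B. XX ^ nat ((t*b) mod M))" for t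
  have vlt: "v t ab < m" if "ab \<in> A \<times> B" for t ab
    using that M unfolding v_def m_def by (auto simp: split_beta)
  have prod: "(XX ^ m - 1) dvd (PA * PB t - (\<Sum>y<m. of_nat (N t y) * XX ^ y))" for t
  proof -
    have "PA * PB t = (\<Sum>ab\<in>A\<times>B. XX ^ (nat (fst ab) + nat ((t * snd ab) mod M)))"
      unfolding PA_def PB_def sum_product sum.cartesian_product by (simp add: power_add split_beta)
    moreover have "(\<Sum>y<m. of_nat (N t y) * XX ^ y) = (\<Sum>ab\<in>A\<times>B. XX ^ v t ab)"
      unfolding N_def using sum_pow_group[OF finAB, of "v t" m] vlt by simp
    moreover have "(XX ^ m - 1) dvd (XX ^ (nat (fst ab) + nat ((t * snd ab) mod M)) - XX ^ v t ab)"
      if "ab \<in> A \<times> B" for ab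
    proof -
      have a0: "fst ab \<ge> 0" using that A by auto
      have "(nat (fst ab) + nat ((t * snd ab) mod M)) mod m = nat ((fst ab + (t * snd ab) mod M) mod M)"
        unfolding m_def using a0 M by (simp add: nat_mod_distrib nat_add_distrib)
      also have "\<dots> = v t ab" unfolding v_def by (simp add: split_beta mod_add_right_eq)
      finally show ?thesis using Z_dvd_pow_mod[OF m0] by metis
    qed
    ultimately show ?thesis
      by (simp add: sum_subtractf[symmetric] dvd_sum)
  qed
  have Ns: "N s y = 1" if "y < m" for y
  proof -
    have "{ab \<in> A\<times>B. v s ab = y} = {(a,b)\<in>A\<times>B. (a + s*b) mod M = int y}"
      unfolding v_def using M by auto
    moreover have "int y \<in> {0..<M}" using that unfolding m_def by simp
    ultimately show ?thesis unfolding N_def using T by simp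
  qed
  have cardAB: "card A * card B = m"
    using card_group[OF finAB, of "v s" m] vlt Ns unfolding N_def by (simp add: card_cartesian_product)
  have S: "(XX ^ m - 1) dvd (PA * PB s - SS m)"
    using prod[of s] Ns unfolding SS_def by simp
  obtain R where R: "PB s ^ L - (\<Sum>b\<in>B. XX ^ (L * nat ((s*b) mod M))) = smult (int L) R"
    unfolding PB_def using frob_sum[OF L B, of "\<lambda>b. nat ((s*b) mod M)"] by blast
  have PBl: "idl l m (PB s ^ L - PB (l*s))"
  proof -
    have "(XX ^ m - 1) dvd (XX ^ (L * nat ((s*b) mod M)) - XX ^ nat (((l*s)*b) mod M))" for b
    proof -
      have "(L * nat ((s*b) mod M)) mod m = nat ((l * ((s*b) mod M)) mod M)"
        unfolding m_def using M lL by (simp add: nat_mod_distrib nat_mult_distrib)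
      also have "\<dots> = nat (((l*s)*b) mod M)" by (simp add: mod_mult_right_eq mult.assoc)
      finally show ?thesis using Z_dvd_pow_mod[OF m0] by metis
    qed
    then have "(XX ^ m - 1) dvd ((\<Sum>b\<in>B. XX ^ (L * nat ((s*b) mod M))) - PB (l*s))"
      unfolding PB_def by (simp add: sum_subtractf[symmetric] dvd_sum)
    then have "idl l m ((\<Sum>b\<in>B. XX ^ (L * nat ((s*b) mod M))) - PB (l*s))" by (rule idl_Z)
    moreover have "idl l m (smult l R)" by (rule idl_smult)
    ultimately have "idl l m (smult l R + ((\<Sum>b\<in>B. XX ^ (L * nat ((s*b) mod M))) - PB (l*s)))"
      by (rule idl_add[rotated])
    moreover have "smult l R + ((\<Sum>b\<in>B. XX ^ (L * nat ((s*b) mod M))) - PB (l*s)) = PB s ^ L - PB (l*s)"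
      using R lL by simp
    ultimately show ?thesis by simp
  qed
  define c where "c = int (card B) ^ (L - 1)"
  have polyPB: "poly (PB s ^ (L - 1)) 1 = c"
    unfolding c_def PB_def by (simp add: poly_power poly_sum)
  have D1: "idl l m (PA * PB (l*s) - PA * PB s ^ L)"
  proof -
    have "idl l m ((PB s ^ L - PB (l*s)) * (- PA))" using PBl by (rule idl_mult)
    then show ?thesis by (simp add: algebra_simps)
  qed
  have D2: "idl l m (PA * PB s ^ L - SS m * PB s ^ (L - 1))"
  proof -
    have LL: "L = Suc (L - 1)" using L1 by simp
    have "PB s ^ L = PB s * PB s ^ (L - 1)" using L1 by (cases L) simp_all
    then have "PA * PB s ^ L - SS m * PB s ^ (L - 1) = (PA * PB s - SS m) * PB s ^ (L - 1)"
      by (simp add: algebra_simps)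
    then show ?thesis using S by (metis dvd_mult2 idl_Z)
  qed
  have D3: "idl l m (SS m * PB s ^ (L - 1) - smult c (SS m))"
    using Z_dvd_mult_S[of m "PB s ^ (L - 1)"] polyPB by (metis idl_Z)
  have D4: "idl l m ((\<Sum>y<m. of_nat (N (l*s) y) * XX ^ y) - PA * PB (l*s))"
  proof (rule idl_Z)
    have "(XX ^ m - 1) dvd - (PA * PB (l*s) - (\<Sum>y<m. of_nat (N (l*s) y) * XX ^ y))"
      using prod[of "l*s"] by (simp only: dvd_minus_iff)
    then show "(XX ^ m - 1) dvd ((\<Sum>y<m. of_nat (N (l*s) y) * XX ^ y) - PA * PB (l*s))"
      by (simp only: minus_diff_eq)
  qed
  define D where "D = (\<Sum>y<m. of_nat (N (l*s) y) * XX ^ y) - smult c (SS m)"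
  have "D = ((\<Sum>y<m. of_nat (N (l*s) y) * XX ^ y) - PA * PB (l*s)) + (PA * PB (l*s) - PA * PB s ^ L)
     + (PA * PB s ^ L - SS m * PB s ^ (L - 1)) + (SS m * PB s ^ (L - 1) - smult c (SS m))"
    unfolding D_def by (simp only: diff_add_cancel)
  moreover have "idl l m (((\<Sum>y<m. of_nat (N (l*s) y) * XX ^ y) - PA * PB (l*s)) + (PA * PB (l*s) - PA * PB s ^ L)
     + (PA * PB s ^ L - SS m * PB s ^ (L - 1)) + (SS m * PB s ^ (L - 1) - smult c (SS m)))"
    by (intro idl_add D1 D2 D3 D4)
  ultimately have iD: "idl l m D" by simp
  have cD: "coeff D j = (if j < m then int (N (l*s) j) - c else 0)" for j
  proof -
    have "coeff (\<Sum>y<m. of_nat (N (l*s) y) * XX ^ y) j = (\<Sum>y<m. if y = j then int (N (l*s) j) else 0)"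
      unfolding coeff_sum by (intro sum.cong refl) (auto simp: of_nat_mult_conv_smult coeff_monom XXpow)
    moreover have "coeff (SS m) j = (\<Sum>y<m. if y = j then 1 else 0)"
      unfolding SS_def coeff_sum by (intro sum.cong refl) (auto simp: coeff_monom XXpow)
    ultimately show ?thesis unfolding D_def by simp
  qed
  have dv: "l dvd int (N (l*s) j) - c" if "j < m" for j
    using idl_low[OF iD m0, of j] cD that by simp
  have ncd: "\<not> l dvd c"
  proof
    assume "l dvd c"
    then have "l dvd int (card B)" unfolding c_def using l prime_dvd_power by blast
    then have "l dvd int (card A * card B)" by simp
    then have "l dvd M" using cardAB M unfolding m_def by simp
    then show False using cl l by (meson coprime_common_divisor dvd_refl not_prime_unit)
  qed
  have Npos: "N (l*s) j \<noteq> 0" if "j < m" for j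
  proof
    assume "N (l*s) j = 0"
    then show False using dv[OF that] ncd by simp
  qed
  have sumN: "(\<Sum>y<m. N (l*s) y) = m"
    using card_group[OF finAB, of "v (l*s)" m] vlt cardAB unfolding N_def by (simp add: card_cartesian_product)
  have N1: "N (l*s) j = 1" if "j < m" for j
  proof (rule ccontr)
    assume "N (l*s) j \<noteq> 1"
    then have "1 < N (l*s) j" using Npos[OF that] by simp
    then have "(\<Sum>y<m. (1::nat)) < (\<Sum>y<m. N (l*s) y)"
      using Npos that by (intro sum_strict_mono_ex1) (auto simp: Suc_le_eq)
    then show False using sumN by simp
  qed
  show ?thesis
  proof
    fix x assume x: "x \<in> {0..<M}"
    have "{(a,b)\<in>A\<times>B. (a + (l*s)*b) mod M = x} = {ab \<in> A\<times>B. v (l*s) ab = nat x}"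
      unfolding v_def using M x by (auto simp: nat_eq_iff)
    moreover have "nat x < m" using x unfolding m_def by auto
    ultimately show "card {(a,b)\<in>A\<times>B. (a + (l*s)*b) mod M = x} = 1" using N1 unfolding N_def by simp
  qed
qed

lemma tijdeman:
  fixes M :: int and A B :: "int set"
  assumes M: "M > 0" and A: "A \<subseteq> {0..<M}" and B: "finite B"
    and T1: "\<forall>x\<in>{0..<M}. card {(a,b)\<in>A\<times>B. (a + 1*b) mod M = x} = 1"
  shows "s \<ge> 1 \<Longrightarrow> coprime s M \<Longrightarrow> \<forall>x\<in>{0..<M}. card {(a,b)\<in>A\<times>B. (a + s*b) mod M = x} = 1"
proof (induction "nat s" arbitrary: s rule: less_induct)
  case less
  show ?case
  proof (cases "s = 1")
    case True then show ?thesis using T1 by simp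
  next
    case False
    then have "\<not> is_unit s" using less.prems by auto
    then obtain l where l: "l dvd s" "prime l" using prime_divisor_exists[of s] less.prems by auto
    then obtain s' where s': "s = l * s'" by blast
    have l1: "l > 1" using l prime_gt_1_int by blast
    have "0 < s'" using zero_less_mult_pos[of l s'] s' less.prems l1 by simp
    then have s'1: "s' \<ge> 1" by simp
    have "1 * s' < l * s'" using l1 s'1 by (intro mult_strict_right_mono) auto
    then have "s' < s" using s' by simp
    then have "nat s' < nat s" using s'1 by simp
    moreover have "coprime s' M" using less.prems s' by simp
    ultimately have IH: "\<forall>x\<in>{0..<M}. card {(a,b)\<in>A\<times>B. (a + s'*b) mod M = x} = 1"
      using less.hyps s'1 by blast
    have "coprime l M" using less.prems s' by simp
    from tij_step[OF M A B l(2) this IH] show ?thesis using s' by simp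
  qed
qed

lemma tiling_T1:
  assumes "tiling M A B"
  shows "\<forall>x\<in>{0..<M}. card {(a,b)\<in>A\<times>B. (a + 1*b) mod M = x} = 1"
proof
  fix x assume x: "x \<in> {0..<M}"
  then obtain ac where ac: "fst ac \<in> A \<and> snd ac \<in> B \<and> (fst ac + snd ac) mod M = x"
    and uq: "\<And>ac'. fst ac' \<in> A \<and> snd ac' \<in> B \<and> (fst ac' + snd ac') mod M = x \<Longrightarrow> ac' = ac"
    using assms unfolding tiling_def ZM_def by blast
  have "{(a,b)\<in>A\<times>B. (a + 1*b) mod M = x} = {ac}"
  proof (intro equalityI subsetI)
    fix y assume "y \<in> {(a,b)\<in>A\<times>B. (a + 1*b) mod M = x}"
    then show "y \<in> {ac}" using uq[of y] by (cases y) simp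
  next
    fix y assume "y \<in> {ac}"
    then show "y \<in> {(a,b)\<in>A\<times>B. (a + 1*b) mod M = x}" using ac by (auto simp: split_beta)
  qed
  then show "card {(a,b)\<in>A\<times>B. (a + 1*b) mod M = x} = 1" by simp
qed

lemma sands:
  fixes M :: int and A B :: "int set"
  assumes M: "M > 0" and til: "tiling M A B"
    and a: "a \<in> A" "a' \<in> A" and b: "b \<in> B" "b' \<in> B"
    and g: "gcd (a - a') M = gcd (b - b') M"
  shows "a = a'"
proof (cases "M = 1")
  case True
  have "A \<subseteq> {0..<M}" using til by (simp add: tiling_def ZM_def)
  then have "a \<in> {0..<1}" "a' \<in> {0..<1}" using a True by auto
  then show ?thesis by simp
next
  case False
  have A: "A \<subseteq> {0..<M}" and Bs: "B \<subseteq> {0..<M}" using til unfolding tiling_def ZM_def by auto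
  have B: "finite B" using Bs finite_subset by blast
  obtain s where s: "coprime s M" "M dvd (a - a') - s * (b - b')"
    using gcd_eq_unit_mult[OF M g[symmetric]] by blast
  define s1 where "s1 = s mod M"
  have cs1: "coprime s1 M" unfolding s1_def using s(1) M
    by (simp add: coprime_iff_gcd_eq_1 gcd_mod_left)
  have "s1 \<noteq> 0" using cs1 False M by auto
  moreover have "s1 \<ge> 0" unfolding s1_def using M by simp
  ultimately have s11: "s1 \<ge> 1" by simp
  have "M dvd (a - a') - s1 * (b - b')"
  proof -
    have "[s1 = s] (mod M)" unfolding s1_def by simp
    then have "[s1 * (b - b') = s * (b - b')] (mod M)" by (simp add: cong_mult)
    then have "M dvd s1 * (b - b') - s * (b - b')" by (simp add: cong_iff_dvd_diff)
    then have "M dvd ((a - a') - s * (b - b')) - (s1 * (b - b') - s * (b - b'))" using s(2) by (rule dvd_diff[rotated])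
    then show ?thesis by (simp add: algebra_simps)
  qed
  moreover have "(a' + s1 * b) - (a + s1 * b') = - ((a - a') - s1 * (b - b'))" by (simp add: algebra_simps)
  ultimately have "M dvd (a' + s1 * b) - (a + s1 * b')" by (simp only: dvd_minus_iff)
  then have eq: "(a' + s1 * b) mod M = (a + s1 * b') mod M"
    by (simp only: mod_eq_dvd_iff)
  define x where "x = (a + s1 * b') mod M"
  have "x \<in> {0..<M}" unfolding x_def using M by simp
  then have c1: "card {(a,b)\<in>A\<times>B. (a + s1*b) mod M = x} = 1"
    using tijdeman[OF M A B tiling_T1[OF til] s11 cs1] by blast
  have "(a, b') \<in> {(a,b)\<in>A\<times>B. (a + s1*b) mod M = x}" using a b unfolding x_def by simp
  moreover have "(a', b) \<in> {(a,b)\<in>A\<times>B. (a + s1*b) mod M = x}" using a b eq unfolding x_def by simp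
  moreover obtain z where "{(a,b)\<in>A\<times>B. (a + s1*b) mod M = x} = {z}" using c1 card_1_singletonE by blast
  ultimately have "(a, b') = z" "(a', b) = z" by blast+
  then have "(a, b') = (a', b)" by simp
  then show ?thesis by simp
qed

lemma gcd_cong_dvd:
  fixes y y' M :: int
  assumes "M dvd y - y'"
  shows "gcd y M = gcd y' M"
proof -
  obtain t where t: "y = y' + M * t" using assms by (metis dvdE diff_add_cancel add.commute)
  show ?thesis unfolding t by (metis gcd_add_mult mult.commute gcd.commute add.commute)
qed

lemma gcd_unit_mult:
  fixes r y M :: int
  assumes "coprime r M"
  shows "gcd (r * y) M = gcd y M"
  using assms by (simp add: gcd_mult_left_left_cancel coprime_commute)

lemma two_choices:
  fixes g G p :: int
  assumes "prime p" "g > 0" "G > 0" "g dvd G" "G dvd p * g"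
  shows "G = g \<or> G = p * g"
proof -
  obtain j where j: "G = g * j" using assms(4) by blast
  have "j > 0" using j assms(2,3) by (simp add: zero_less_mult_iff)
  have "g * j dvd g * p" using assms(5) j by (simp add: mult.commute)
  then have "j dvd p" using assms(2) by simp
  then have "j = 1 \<or> j = p" using assms(1) \<open>j > 0\<close> by (simp add: prime_int_iff)
  then show ?thesis using j by auto
qed

locale ctx =
  fixes M p :: int and n :: nat
  assumes M: "M > 0" and p: "prime p" and pM: "p dvd M" and n: "n = multiplicity p M"
begin

definition q where "q = p ^ n"
definition h where "h = M div p"
definition u where "u = M div q"

lemma p1: "p > 1" using p prime_gt_1_int by blast
lemma pnu: "\<not> is_unit p" using p not_prime_unit by blast

lemma qM: "q dvd M" unfolding q_def using multiplicity_dvd[of p M] n by simp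

lemma not_pqM: "\<not> p * q dvd M"
proof
  assume "p * q dvd M"
  then have "p ^ Suc n dvd M" unfolding q_def by simp
  then have "Suc n \<le> multiplicity p M" using M p pnu
    power_dvd_iff_le_multiplicity[of M p "Suc n"] by simp
  then show False using n by simp
qed

lemma n1: "n \<ge> 1"
proof -
  have "p ^ 1 dvd M" using pM by simp
  then have "1 \<le> multiplicity p M" using M p pnu
    power_dvd_iff_le_multiplicity[of M p 1] by simp
  then show ?thesis using n by simp
qed

lemma Mph: "M = p * h" unfolding h_def using pM by simp
lemma Mqu: "M = q * u" unfolding u_def using qM by simp
lemma h0: "h > 0"
proof -
  have "0 < p * h" using Mph M by simp
  then show ?thesis using p1 by (simp add: zero_less_mult_iff)
qed
lemma q0: "q > 0" unfolding q_def using p1 by simp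
lemma u0: "u > 0"
proof -
  have "0 < q * u" using Mqu M by simp
  then show ?thesis using q0 by (simp add: zero_less_mult_iff)
qed

lemma cop_pu: "coprime p u"
proof (rule ccontr)
  assume "\<not> coprime p u"
  then have "p dvd u" using prime_imp_coprime[OF p] by blast
  then have "p * q dvd q * u" by (simp add: mult.commute)
  then show False using not_pqM Mqu by simp
qed

lemma cop_qu: "coprime q u" unfolding q_def using cop_pu by simp

lemma h_eq: "h = p ^ (n - 1) * u"
proof -
  have "M = p * (p ^ (n - 1) * u)" using Mqu n1 unfolding q_def
    by (metis (no_types, lifting) Suc_diff_le diff_Suc_1 mult.assoc power_Suc)
  then have "p * h = p * (p ^ (n - 1) * u)" using Mph by simp
  then show ?thesis using p1 by simp
qed

lemma pn1_h: "p ^ (n - 1) dvd h" using h_eq by simp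
lemma pn1_q: "p ^ (n - 1) dvd q" unfolding q_def by (simp add: le_imp_power_dvd)
lemma u_h: "u dvd h" using h_eq by simp
lemma h_M: "h dvd M" using Mph by (metis dvd_triv_right)

lemma not_q_h: "\<not> q dvd h"
proof
  assume "q dvd h"
  then have "p * q dvd p * h" by simp
  then show False using not_pqM Mph by simp
qed

lemma lcm_qh: "q dvd y \<Longrightarrow> h dvd y \<Longrightarrow> M dvd y"
proof -
  assume "q dvd y" "h dvd y"
  then have "u dvd y" using u_h dvd_trans by blast
  then have "q * u dvd y" using \<open>q dvd y\<close> cop_qu by (simp add: divides_mult)
  then show "M dvd y" using Mqu by simp
qed

lemma F5:
  assumes "m dvd M" "m > 0" "\<not> q dvd m"
  shows "m dvd h"
proof -
  have "m * p dvd M"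
  proof (rule multiplicity_le_imp_dvd)
    show "m * p \<noteq> 0" using assms(2) p1 by simp
    fix l :: int assume l: "prime l"
    show "multiplicity l (m * p) \<le> multiplicity l M"
    proof (cases "l = p")
      case True
      have "multiplicity p m < n" using assms(2,3) p unfolding q_def
        by (intro multiplicity_lessI) auto
      moreover have "multiplicity p (m * p) = multiplicity p m + 1"
        using assms(2) p1 prime_elem_multiplicity_mult_distrib[OF prime_imp_prime_elem[OF p], of m p]
          multiplicity_prime[OF prime_imp_prime_elem[OF p]] by simp
      ultimately show ?thesis using True n by simp
    next
      case False
      have "multiplicity l (m * p) = multiplicity l m + multiplicity l p"
        using assms(2) p1 prime_elem_multiplicity_mult_distrib[OF prime_imp_prime_elem[OF l], of m p] by simp
      also have "multiplicity l p = 0" using False l p by (simp add: prime_multiplicity_other)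
      finally show ?thesis using assms(1) M dvd_imp_multiplicity_le by auto
    qed
  qed
  then have "p * m dvd p * h" using Mph by (simp add: mult.commute)
  then show ?thesis using p1 by simp
qed

lemma fiber_iff: "y \<in> fiber M p x \<longleftrightarrow> y \<in> ZM M \<and> h dvd y - x"
proof
  assume "y \<in> fiber M p x"
  then obtain k where k: "y = (x + k * h) mod M" unfolding fiber_def fiber_set_def h_def by blast
  have "M dvd (x + k * h) - y" unfolding k by (simp add: mod_eq_dvd_iff[symmetric])
  then have "h dvd (x + k * h) - y" using h_M dvd_trans by blast
  then have "h dvd ((x + k * h) - y) - k * h" by (rule dvd_diff) simp
  moreover have "((x + k * h) - y) - k * h = x - y" by simp
  ultimately have "h dvd x - y" by metis
  then have "h dvd y - x" by (simp add: dvd_diff_commute)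
  moreover have "y \<in> ZM M" unfolding k ZM_def using M by simp
  ultimately show "y \<in> ZM M \<and> h dvd y - x" by blast
next
  assume a: "y \<in> ZM M \<and> h dvd y - x"
  then obtain t where t: "y - x = h * t" by blast
  define k where "k = t mod p"
  have k: "0 \<le> k" "k < p" unfolding k_def using p1 by auto
  have "M dvd (x + k * h) - y"
  proof -
    have "t = k + p * (t div p)" unfolding k_def by simp
    then have "t * h = (k + p * (t div p)) * h" by (rule arg_cong[where f="\<lambda>v. v * h"])
    then have "t * h = k * h + M * (t div p)" using Mph by (simp add: algebra_simps)
    moreover have "(x + k * h) - y = k * h - t * h" using t by (simp add: algebra_simps)
    ultimately have "(x + k * h) - y = - (M * (t div p))" by simp
    then show ?thesis by simp
  qed
  then have "(x + k * h) mod M = y mod M" by (simp add: mod_eq_dvd_iff)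
  also have "y mod M = y" using a unfolding ZM_def by simp
  finally show "y \<in> fiber M p x" unfolding fiber_def fiber_set_def h_def[symmetric] using k by blast
qed

end

lemma mod_minus_dvd: "(M::int) dvd (w mod M - w)"
proof -
  have "w mod M - w = - (M * (w div M))" by (simp add: minus_div_mult_eq_mod[symmetric])
  then show ?thesis by simp
qed

lemma dvd_via: "(M::int) dvd X \<Longrightarrow> d dvd M \<Longrightarrow> d dvd X" by (rule dvd_trans)

locale ctx2 = ctx +
  fixes A B :: "int set"
  assumes til: "tiling M A B"
begin

lemma AZ: "A \<subseteq> ZM M" using til unfolding tiling_def by blast
lemma BZ: "B \<subseteq> ZM M" using til unfolding tiling_def by blast

lemma q_M_dvd: "M dvd X \<Longrightarrow> q dvd X" using qM dvd_trans by blast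
lemma h_M_dvd: "M dvd X \<Longrightarrow> h dvd X" using h_M dvd_trans by blast

lemma cop_q: "coprime r M \<Longrightarrow> coprime r q"
  using Mqu by (metis coprime_mult_right_iff)

lemma sig_mem:
  assumes "c \<in> dil M r B" "a \<in> A" "(c + a) mod M \<in> fiber M p z"
  shows "\<exists>b\<in>B. c = (r * b) mod M \<and> h dvd (a + r * b) - z"
proof -
  obtain b where b: "b \<in> B" "c = (r * b) mod M" using assms(1) unfolding dil_def by blast
  have h1: "h dvd (c + a) mod M - z" using assms(3) fiber_iff by blast
  have h2: "h dvd (c + a) mod M - (c + a)" by (rule h_M_dvd[OF mod_minus_dvd])
  have h3: "h dvd c - r * b" unfolding b(2) by (rule h_M_dvd[OF mod_minus_dvd])
  have "h dvd ((c + a) mod M - z) - ((c + a) mod M - (c + a)) - (c - r * b)"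
    by (rule dvd_diff[OF dvd_diff[OF h1 h2] h3])
  moreover have "((c + a) mod M - z) - ((c + a) mod M - (c + a)) - (c - r * b) = (a + r * b) - z"
    by (simp add: algebra_simps)
  ultimately have "h dvd (a + r * b) - z" by (simp only:)
  then show ?thesis using b by blast
qed

definition K3 where
  "K3 \<longleftrightarrow> (\<forall>a\<in>A. \<forall>a'\<in>A. \<forall>b\<in>B. \<forall>b'\<in>B. \<forall>r. coprime r M \<longrightarrow>
      h dvd (a + r*b) - (a' + r*b') \<longrightarrow> q dvd b - b')"

definition Q2 where
  "Q2 \<longleftrightarrow> (\<forall>r\<in>units_ZM M. \<forall>z\<in>ZM M. splits_parity M p n (dil M r B) A (fiber M p z))"

definition Q3 where
  "Q3 \<longleftrightarrow> (\<forall>a\<in>A. \<forall>b\<in>B. \<forall>x\<in>fiber M p a. A_xy M A B x b \<subseteq> Pi_plane M x q)"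

definition D2 where
  "D2 \<longleftrightarrow> (\<forall>m. m > 0 \<longrightarrow> q dvd m \<longrightarrow> m dvd M \<longrightarrow> m \<in> Div M A \<longrightarrow> m div p \<notin> Div M B)"

lemma Q3_K3: "Q3 \<Longrightarrow> K3"
  unfolding K3_def
proof (intro ballI allI impI)
  assume Q3: "Q3"
  fix a a' b b' r assume a: "a \<in> A" "a' \<in> A" and b: "b \<in> B" "b' \<in> B"
    and r: "coprime r M" and hd: "h dvd (a + r*b) - (a' + r*b')"
  define w where "w = a' - r * (b - b')"
  define x where "x = w mod M"
  have xZ: "x \<in> ZM M" unfolding x_def ZM_def using M by simp
  have "h dvd x - a"
  proof -
    have e: "(x - w) - ((a + r*b) - (a' + r*b')) = x - a" unfolding w_def by (simp add: algebra_simps)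
    have "h dvd x - w" unfolding x_def by (rule h_M_dvd[OF mod_minus_dvd])
    then have "h dvd (x - w) - ((a + r*b) - (a' + r*b'))" using hd by (rule dvd_diff)
    then show ?thesis unfolding e .
  qed
  then have xf: "x \<in> fiber M p a" using xZ fiber_iff by blast
  have Mx: "M dvd (x - a') - (- r * (b - b'))" unfolding x_def w_def
    using mod_minus_dvd[of M "a' - r * (b - b')"] by (simp add: algebra_simps)
  have "gcd (x - a') M = gcd (- r * (b - b')) M" using gcd_cong_dvd[OF Mx] .
  also have "\<dots> = gcd (b - b') M" using gcd_unit_mult[of "- r" M "b - b'"] r by simp
  finally have "a' \<in> A_xy M A B x b" unfolding A_xy_def using a(2) b(2) by blast
  then have "a' \<in> Pi_plane M x q" using Q3 a(1) b(1) xf unfolding Q3_def by blast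
  then have "q dvd x - a'" unfolding Pi_plane_def by simp
  moreover have "q dvd (x - a') - (- r * (b - b'))" by (rule q_M_dvd[OF Mx])
  ultimately have "q dvd (x - a') - ((x - a') - (- r * (b - b')))" by (rule dvd_diff)
  then have "q dvd - r * (b - b')" by simp
  then have "q dvd r * (b - b')" by simp
  then show "q dvd b - b'" using cop_q[OF r] by (simp add: coprime_dvd_mult_right_iff coprime_commute)
qed

lemma K3_Q2: "K3 \<Longrightarrow> Q2"
  unfolding Q2_def splits_parity_def
proof (intro ballI conjI impI)
  assume K: "K3"
  fix r z assume r: "r \<in> units_ZM M" and z: "z \<in> ZM M"
  have cr: "coprime r M" using r unfolding units_ZM_def by simp
  {
    fix c c' assume c: "c \<in> Sigma_set M (dil M r B) A (fiber M p z)"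
      and c': "c' \<in> Sigma_set M (dil M r B) A (fiber M p z)"
    obtain a where a: "a \<in> A" "(c + a) mod M \<in> fiber M p z" "c \<in> dil M r B"
      using c unfolding Sigma_set_def by blast
    obtain a' where a': "a' \<in> A" "(c' + a') mod M \<in> fiber M p z" "c' \<in> dil M r B"
      using c' unfolding Sigma_set_def by blast
    obtain b where b: "b \<in> B" "c = (r * b) mod M" "h dvd (a + r * b) - z"
      using sig_mem[OF a(3,1,2)] by blast
    obtain b' where b': "b' \<in> B" "c' = (r * b') mod M" "h dvd (a' + r * b') - z"
      using sig_mem[OF a'(3,1,2)] by blast
    have "h dvd ((a + r * b) - z) - ((a' + r * b') - z)" using b(3) b'(3) by (rule dvd_diff)
    moreover have "((a + r * b) - z) - ((a' + r * b') - z) = (a + r*b) - (a' + r*b')" by simp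
    ultimately have "h dvd (a + r*b) - (a' + r*b')" by simp
    then have qb: "q dvd b - b'" using K a(1) a'(1) b(1) b'(1) cr unfolding K3_def by blast
    have ce: "(c - r * b) - (c' - r * b') + r * (b - b') = c - c'" by (simp add: algebra_simps)
    have q1: "q dvd c - r * b" unfolding b(2) by (rule q_M_dvd[OF mod_minus_dvd])
    have q2: "q dvd c' - r * b'" unfolding b'(2) by (rule q_M_dvd[OF mod_minus_dvd])
    have q3: "q dvd r * (b - b')" using qb by simp
    have "q dvd (c - r * b) - (c' - r * b') + r * (b - b')" by (rule dvd_add[OF dvd_diff[OF q1 q2] q3])
    then show "p ^ n dvd c - c'" unfolding q_def ce .
  }
  {
    fix a a' assume a: "a \<in> Sigma_set M A (dil M r B) (fiber M p z)"
      and a': "a' \<in> Sigma_set M A (dil M r B) (fiber M p z)" and ne: "a \<noteq> a'"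
    obtain c where c: "c \<in> dil M r B" "(a + c) mod M \<in> fiber M p z" "a \<in> A"
      using a unfolding Sigma_set_def by blast
    obtain c' where c': "c' \<in> dil M r B" "(a' + c') mod M \<in> fiber M p z" "a' \<in> A"
      using a' unfolding Sigma_set_def by blast
    obtain b where b: "b \<in> B" "c = (r * b) mod M" "h dvd (a + r * b) - z"
      using sig_mem[OF c(1,3)] c(2) by (metis add.commute)
    obtain b' where b': "b' \<in> B" "c' = (r * b') mod M" "h dvd (a' + r * b') - z"
      using sig_mem[OF c'(1,3)] c'(2) by (metis add.commute)
    have "h dvd ((a + r * b) - z) - ((a' + r * b') - z)" using b(3) b'(3) by (rule dvd_diff)
    moreover have "((a + r * b) - z) - ((a' + r * b') - z) = (a + r*b) - (a' + r*b')" by simp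
    ultimately have hW: "h dvd (a + r*b) - (a' + r*b')" by simp
    then have qb: "q dvd b - b'" using K c(3) c'(3) b(1) b'(1) cr unfolding K3_def by blast
    have W: "a - a' = ((a + r*b) - (a' + r*b')) - r * (b - b')" by (simp add: algebra_simps)
    have "p ^ (n - 1) dvd (a + r*b) - (a' + r*b')" using hW pn1_h dvd_trans by blast
    moreover have "p ^ (n - 1) dvd r * (b - b')" using qb pn1_q dvd_trans dvd_mult by blast
    ultimately show "p ^ (n - 1) dvd a - a'" unfolding W by (rule dvd_diff)
    show "\<not> p ^ n dvd a - a'"
    proof
      assume "p ^ n dvd a - a'"
      then have "q dvd a - a'" unfolding q_def .
      moreover have "q dvd r * (b - b')" using qb by simp
      ultimately have "q dvd (a - a') + r * (b - b')" by (rule dvd_add)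
      then have "q dvd (a + r*b) - (a' + r*b')" by (simp add: algebra_simps)
      then have MW: "M dvd (a + r*b) - (a' + r*b')" using hW lcm_qh by blast
      have "M dvd (a - a') - r * (b' - b)" using MW by (simp add: algebra_simps)
      then have "gcd (a - a') M = gcd (r * (b' - b)) M" by (rule gcd_cong_dvd)
      also have "\<dots> = gcd (b' - b) M" using gcd_unit_mult[OF cr] by simp
      finally have "a = a'" using sands[OF M til c(3) c'(3) b'(1) b(1)] by simp
      then show False using ne by simp
    qed
  }
qed

end

context ctx2 begin

lemma Q2_Q3: "Q2 \<Longrightarrow> Q3"
  unfolding Q3_def
proof (intro ballI subsetI)
  assume Q2: "Q2"
  fix a b x y assume a: "a \<in> A" and b: "b \<in> B" and x: "x \<in> fiber M p a" and y: "y \<in> A_xy M A B x b"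
  obtain b' where y': "y \<in> A" "b' \<in> B" and g: "gcd (x - y) M = gcd (b - b') M"
    using y unfolding A_xy_def by blast
  obtain s where s: "coprime s M" "M dvd (x - y) - s * (b - b')"
    using gcd_eq_unit_mult[OF M g[symmetric]] by blast
  define r where "r = (- s) mod M"
  have rU: "r \<in> units_ZM M"
  proof -
    have "gcd r M = gcd (- s) M" unfolding r_def using M by (simp add: gcd_mod_left)
    also have "\<dots> = 1" using s(1) by (simp add: coprime_iff_gcd_eq_1)
    finally show ?thesis unfolding units_ZM_def ZM_def r_def using M by (simp add: coprime_iff_gcd_eq_1)
  qed
  have hr: "M dvd r + s" using mod_minus_dvd[of M "- s"] unfolding r_def by simp
  define z where "z = (y + r * b') mod M"
  have zZ: "z \<in> ZM M" unfolding z_def ZM_def using M by simp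
  define c where "c = (r * b) mod M"
  define c' where "c' = (r * b') mod M"
  have cd: "c \<in> dil M r B" unfolding c_def dil_def using b by blast
  have cd': "c' \<in> dil M r B" unfolding c'_def dil_def using y' by blast
  have "(c' + y) mod M = z" unfolding c'_def z_def by (simp add: mod_add_left_eq mod_add_right_eq add.commute)
  then have "(c' + y) mod M \<in> fiber M p z" using zZ fiber_iff by simp
  then have cS': "c' \<in> Sigma_set M (dil M r B) A (fiber M p z)"
    unfolding Sigma_set_def using cd' y'(1) by blast
  have "h dvd (c + a) mod M - z"
  proof -
    have m1: "M dvd (c + a) mod M - (c + a)" by (rule mod_minus_dvd)
    have m2: "M dvd c - r * b" unfolding c_def by (rule mod_minus_dvd)
    have m3: "M dvd z - (y + r * b')" unfolding z_def by (rule mod_minus_dvd)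
    have m4: "M dvd (r + s) * (b - b')" using hr by simp
    have "M dvd ((c + a) mod M - (c + a)) + (c - r * b) - (z - (y + r * b')) + (r + s) * (b - b')
        + ((x - y) - s * (b - b'))"
      by (rule dvd_add[OF dvd_add[OF dvd_diff[OF dvd_add[OF m1 m2] m3] m4] s(2)])
    moreover have "((c + a) mod M - (c + a)) + (c - r * b) - (z - (y + r * b')) + (r + s) * (b - b')
        + ((x - y) - s * (b - b')) = ((c + a) mod M - z) - (a - x)"
      by (simp add: algebra_simps)
    ultimately have "M dvd ((c + a) mod M - z) - (a - x)" by (simp only:)
    then have "h dvd ((c + a) mod M - z) - (a - x)" by (rule h_M_dvd)
    moreover have "h dvd a - x" using x fiber_iff by (simp add: dvd_diff_commute)
    ultimately have "h dvd ((c + a) mod M - z) - (a - x) + (a - x)" by (rule dvd_add)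
    then show ?thesis by simp
  qed
  moreover have "(c + a) mod M \<in> ZM M" unfolding ZM_def using M by simp
  ultimately have "(c + a) mod M \<in> fiber M p z" using fiber_iff by simp
  then have cS: "c \<in> Sigma_set M (dil M r B) A (fiber M p z)"
    unfolding Sigma_set_def using cd a by blast
  have "splits_parity M p n (dil M r B) A (fiber M p z)" using Q2 rU zZ unfolding Q2_def by blast
  then have qc: "q dvd c - c'" using cS cS' unfolding splits_parity_def q_def by blast
  have t1: "q dvd (x - y) - s * (b - b')" using q_M_dvd s(2) by blast
  have t2: "q dvd (r + s) * (b - b')" using q_M_dvd hr by simp
  have t3: "q dvd c - r * b" unfolding c_def by (rule q_M_dvd[OF mod_minus_dvd])
  have t4: "q dvd c' - r * b'" unfolding c'_def by (rule q_M_dvd[OF mod_minus_dvd])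
  have "q dvd ((x - y) - s * (b - b')) + (r + s) * (b - b') - (c - c') + (c - r * b) - (c' - r * b')"
    by (rule dvd_diff[OF dvd_add[OF dvd_diff[OF dvd_add[OF t1 t2] qc] t3] t4])
  moreover have "((x - y) - s * (b - b')) + (r + s) * (b - b') - (c - c') + (c - r * b) - (c' - r * b') = x - y"
    by (simp add: algebra_simps)
  ultimately have "q dvd x - y" by (simp only:)
  then show "y \<in> Pi_plane M x q" unfolding Pi_plane_def using AZ y'(1) by blast
qed

lemma Q3_D2: "Q3 \<Longrightarrow> D2"
  unfolding D2_def
proof (intro allI impI notI)
  assume Q3: "Q3"
  fix m assume m0: "m > 0" and qm: "q dvd m" and mM: "m dvd M" and mA: "m \<in> Div M A"
    and mB: "m div p \<in> Div M B"
  obtain a a' where a: "a \<in> A" "a' \<in> A" and md: "m = gcd (a - a') M"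
    using mA unfolding Div_def by blast
  obtain b b' where b: "b \<in> B" "b' \<in> B" and gd: "m div p = gcd (b - b') M"
    using mB unfolding Div_def by blast
  define g where "g = m div p"
  have "p dvd q" unfolding q_def using n1 by (simp add: dvd_power)
  then have "p dvd m" using qm dvd_trans by blast
  then have mpg: "m = p * g" unfolding g_def by simp
  have g0: "g > 0" using m0 mpg p1 by (simp add: zero_less_mult_iff)
  have "p * g dvd p * h" using mM mpg Mph by simp
  then have gh: "g dvd h" using p1 by simp
  have mnh: "\<not> m dvd h" using qm not_q_h dvd_trans by blast
  define x where "x = (a + h) mod M"
  define d where "d = a - a'"
  have xZ: "x \<in> ZM M" unfolding x_def ZM_def using M by simp
  have "h dvd x - a"
  proof -
    have "h dvd x - (a + h)" unfolding x_def by (rule h_M_dvd[OF mod_minus_dvd])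
    then have "h dvd (x - (a + h)) + h" by (rule dvd_add) simp
    moreover have "(x - (a + h)) + h = x - a" by simp
    ultimately show ?thesis by (simp only:)
  qed
  then have xf: "x \<in> fiber M p a" using xZ fiber_iff by simp
  have e1: "gcd (x - a') M = gcd (d + h) M"
    using mod_minus_dvd[of M "a + h"] unfolding x_def d_def by (intro gcd_cong_dvd) (simp add: algebra_simps)
  have e2: "gcd (d + h) h = gcd d h" by (rule gcd_cong_dvd) simp
  have "gcd M h = h" using h_M h0 by (simp add: gcd_proj2_if_dvd_int)
  then have e3: "gcd d h = gcd m h" unfolding md d_def by (simp add: gcd.assoc)
  have e4: "gcd m h = g"
  proof -
    have "g dvd gcd m h" using mpg gh by simp
    moreover have "gcd m h dvd p * g" using mpg by (metis gcd_dvd1)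
    moreover have "gcd m h > 0" using m0 by simp
    ultimately have "gcd m h = g \<or> gcd m h = p * g" using two_choices[OF p g0] by blast
    moreover have "gcd m h \<noteq> m" using mnh by (metis gcd_dvd2)
    ultimately show ?thesis using mpg by auto
  qed
  have "m dvd d" unfolding md d_def by simp
  then have gd': "g dvd d" using mpg by (simp add: dvd_mult_right)
  have "gcd (d + h) M = g"
  proof -
    have "g dvd gcd (d + h) M" using gd' gh mM mpg by (simp add: dvd_mult_right)
    moreover have "gcd (d + h) M dvd p * g"
    proof -
      have "gcd (d + h) M dvd gcd (p * (d + h)) (p * h)" using Mph by simp
      also have "gcd (p * (d + h)) (p * h) = p * gcd (d + h) h"
        using gcd_mult_distrib_int[of p "d + h" h] p1 by simp
      finally show ?thesis using e2 e3 e4 by simp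
    qed
    moreover have "gcd (d + h) M > 0" using M by simp
    ultimately have "gcd (d + h) M = g \<or> gcd (d + h) M = p * g" using two_choices[OF p g0] by blast
    moreover have "gcd (d + h) M \<noteq> m"
    proof
      assume "gcd (d + h) M = m"
      then have "m dvd d + h" by (metis gcd_dvd1)
      then have "m dvd (d + h) - d" using \<open>m dvd d\<close> by (rule dvd_diff)
      then show False using mnh by simp
    qed
    ultimately show ?thesis using mpg by auto
  qed
  then have "gcd (x - a') M = gcd (b - b') M" using e1 gd g_def by simp
  then have "a' \<in> A_xy M A B x b" unfolding A_xy_def using a(2) b(2) by blast
  then have "a' \<in> Pi_plane M x q" using Q3 a(1) b(1) xf unfolding Q3_def by blast
  then have "q dvd x - a'" unfolding Pi_plane_def by simp
  then have "q dvd gcd (x - a') M" using qM by simp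
  then have "q dvd g" using e1 \<open>gcd (d + h) M = g\<close> by simp
  then have "q dvd h" using gh dvd_trans by blast
  then show False using not_q_h by simp
qed

lemma D2_Q3: "D2 \<Longrightarrow> Q3"
  unfolding Q3_def
proof (intro ballI subsetI)
  assume D2: "D2"
  fix a b x a' assume a: "a \<in> A" and b: "b \<in> B" and x: "x \<in> fiber M p a" and y: "a' \<in> A_xy M A B x b"
  obtain b' where y': "a' \<in> A" "b' \<in> B" and gg: "gcd (x - a') M = gcd (b - b') M"
    using y unfolding A_xy_def by blast
  have "q dvd x - a'"
  proof (rule ccontr)
    assume nq: "\<not> q dvd x - a'"
    define g where "g = gcd (x - a') M"
    define d where "d = a - a'"
    have g0: "g > 0" unfolding g_def using M by simp
    have nqg: "\<not> q dvd g"
    proof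
      assume "q dvd g" then have "q dvd x - a'" unfolding g_def by (metis gcd_dvd1 dvd_trans)
      then show False using nq by simp
    qed
    have gh: "g dvd h" using F5[of g] g0 nqg unfolding g_def by simp
    have hx: "h dvd x - a" using x fiber_iff by simp
    have "gcd M h = h" using h_M h0 by (simp add: gcd_proj2_if_dvd_int)
    then have "gcd (x - a') h = gcd g h" unfolding g_def by (simp add: gcd.assoc)
    also have "\<dots> = g" using gh g0 by (simp add: gcd_proj1_if_dvd_int)
    finally have "gcd (x - a') h = g" .
    moreover have "gcd (x - a') h = gcd d h"
      using hx unfolding d_def by (intro gcd_cong_dvd) (simp add: algebra_simps)
    ultimately have gdh: "gcd d h = g" by simp
    define G where "G = gcd d M"
    have G0: "G > 0" unfolding G_def using M by simp
    have "g dvd G" unfolding G_def using gdh g_def by (metis gcd_dvd1 gcd_dvd2 gcd_greatest)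
    moreover have "G dvd p * g"
    proof -
      have "G dvd gcd (p * d) (p * h)" unfolding G_def using Mph by simp
      also have "gcd (p * d) (p * h) = p * gcd d h"
        using gcd_mult_distrib_int[of p d h] p1 by simp
      finally show ?thesis using gdh by simp
    qed
    ultimately have "G = g \<or> G = p * g" using two_choices[OF p g0 G0] by blast
    then show False
    proof
      assume "G = g"
      then have "gcd (a - a') M = gcd (b - b') M" using gg unfolding G_def g_def d_def by simp
      then have "a = a'" using sands[OF M til a y'(1) b y'(2)] by simp
      then have "G = M" unfolding G_def d_def using M by simp
      then have "q dvd g" using \<open>G = g\<close> qM by simp
      then show False using nqg by simp
    next
      assume Gpg: "G = p * g"
      have "\<not> (p * g) dvd h"
      proof
        assume "p * g dvd h"
        moreover have "p * g dvd d" using Gpg unfolding G_def by (metis gcd_dvd1)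
        ultimately have "p * g dvd gcd d h" by simp
        then have "p * g dvd g" using gdh by simp
        then have "p * g \<le> g" using g0 by (simp add: zdvd_imp_le)
        then show False using p1 g0 by simp
      qed
      moreover have "p * g dvd M" using Gpg unfolding G_def by (metis gcd_dvd2)
      moreover have "p * g > 0" using p1 g0 by simp
      ultimately have qpg: "q dvd p * g" using F5 by blast
      have "p * g = gcd (a - a') M" using Gpg unfolding G_def d_def by simp
      then have "p * g \<in> Div M A" unfolding Div_def using a y'(1) by blast
      then have "p * g div p \<notin> Div M B" using D2 qpg \<open>p * g dvd M\<close> \<open>p * g > 0\<close> unfolding D2_def by blast
      moreover have "p * g div p = g" using p1 by simp
      moreover have "g \<in> Div M B" unfolding Div_def g_def using gg b y'(2) by blast
      ultimately show False by simp
    qed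
  qed
  then show "a' \<in> Pi_plane M x q" unfolding Pi_plane_def using AZ y'(1) by blast
qed

end

lemma cis_one_dvd:
  fixes Q t :: int
  assumes Q: "Q > 0" and c: "cis (2 * pi * of_int t / of_int Q) = 1"
  shows "Q dvd t"
proof -
  have "cos (2 * pi * of_int t / of_int Q) = 1" using arg_cong[OF c, of Re] by simp
  then obtain j :: int where j: "2 * pi * of_int t / of_int Q = of_int j * 2 * pi"
    using cos_one_2pi_int by blast
  then have "of_int t = (of_int (j * Q) :: real)" using Q by (simp add: field_simps)
  then have "t = j * Q" by linarith
  then show ?thesis by simp
qed

lemma dvd_cis_one:
  fixes Q t :: int
  assumes Q: "Q > 0" and d: "Q dvd t"
  shows "cis (2 * pi * of_int t / of_int Q) = 1"
proof -
  obtain j where "t = Q * j" using d by blast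
  then have "2 * pi * of_int t / of_int Q = 2 * pi * of_int j" using Q by simp
  then show ?thesis by (simp add: cis_multiple_2pi)
qed

lemma prod_lin_dvd:
  fixes P :: "complex poly"
  assumes "finite K" "inj_on \<zeta> K" "\<forall>k\<in>K. poly P (\<zeta> k) = 0"
  shows "(\<Prod>k\<in>K. [:- \<zeta> k, 1:]) dvd P"
  using assms
proof (induction K arbitrary: P rule: finite_induct)
  case empty then show ?case by simp
next
  case (insert k K)
  have "[:- \<zeta> k, 1:] dvd P" using insert.prems(2) poly_eq_0_iff_dvd by blast
  then obtain P' where P': "P = [:- \<zeta> k, 1:] * P'" by blast
  have "\<forall>k'\<in>K. poly P' (\<zeta> k') = 0"
  proof
    fix k' assume k': "k' \<in> K"
    have "\<zeta> k' \<noteq> \<zeta> k"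
    proof
      assume "\<zeta> k' = \<zeta> k"
      then have "k' = k" using inj_onD[OF insert.prems(1)] k' by blast
      then show False using insert.hyps(2) k' by simp
    qed
    moreover have "poly P (\<zeta> k') = 0" using insert.prems(2) k' by blast
    ultimately show "poly P' (\<zeta> k') = 0" using P' by simp
  qed
  then have d: "(\<Prod>k\<in>K. [:- \<zeta> k, 1:]) dvd P'" using insert.IH insert.prems(1) by (simp add: inj_on_insert)
  have e: "(\<Prod>k\<in>insert k K. [:- \<zeta> k, 1:]) = [:- \<zeta> k, 1:] * (\<Prod>k\<in>K. [:- \<zeta> k, 1:])"
    using insert.hyps by (rule prod.insert)
  show ?case unfolding e P' using d by (rule mult_dvd_mono[OF dvd_refl])
qed

context ctx2 begin

lemma cyc_from_Q2:
  assumes Q2: "Q2"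
  shows "cyclotomic (nat q) dvd mask_poly A"
proof -
  define Q where "Q = nat q"
  have Qq: "int Q = q" unfolding Q_def using q0 by simp
  have M2: "1 < M" using pM p1 M zdvd_imp_le by fastforce
  have hM: "h \<le> M" using h_M M zdvd_imp_le by blast
  have finA: "finite A" using AZ finite_subset unfolding ZM_def by blast
  have finB: "finite B" using BZ finite_subset unfolding ZM_def by blast
  note T1 = tiling_T1[OF til]
  have rep: "\<exists>b. b \<in> B \<and> (\<exists>a\<in>A. (a + b) mod M = z)" if "z \<in> ZM M" for z
    using til that unfolding tiling_def by blast
  define \<beta> where "\<beta> z = (SOME b. b \<in> B \<and> (\<exists>a\<in>A. (a + b) mod M = z))" for z
  have \<beta>: "\<beta> z \<in> B \<and> (\<exists>a\<in>A. (a + \<beta> z) mod M = z)" if "z \<in> ZM M" for z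
    unfolding \<beta>_def using someI_ex[OF rep[OF that]] .
  have dil1: "dil M 1 B = B"
  proof -
    have "dil M 1 B = {b mod M | b. b \<in> B}" unfolding dil_def by simp
    also have "\<dots> = B"
    proof (intro equalityI subsetI)
      fix x assume "x \<in> {b mod M | b. b \<in> B}"
      then obtain b where "b \<in> B" "x = b mod M" by blast
      moreover have "b mod M = b" using \<open>b \<in> B\<close> BZ unfolding ZM_def by auto
      ultimately show "x \<in> B" by simp
    next
      fix x assume "x \<in> B"
      moreover have "x mod M = x" using \<open>x \<in> B\<close> BZ unfolding ZM_def by auto
      ultimately show "x \<in> {b mod M | b. b \<in> B}" by force
    qed
    finally show ?thesis .
  qed
  have u1: "1 \<in> units_ZM M" unfolding units_ZM_def ZM_def using M2 by simp
  have qB: "q dvd b - \<beta> (((a + b) mod M) mod h)" if ab: "a \<in> A" "b \<in> B" for a b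
  proof -
    define y where "y = (a + b) mod M"
    define z where "z = y mod h"
    have yZ: "y \<in> ZM M" unfolding y_def ZM_def using M by simp
    have "y mod h < h" "0 \<le> y mod h" using h0 by simp_all
    then have zZ: "z \<in> ZM M" unfolding z_def ZM_def using hM by simp
    obtain a0 where a0: "a0 \<in> A" "(a0 + \<beta> z) mod M = z" using \<beta>[OF zZ] by blast
    have "h dvd y - z" unfolding z_def by (simp add: minus_mod_eq_mult_div)
    then have "(b + a) mod M \<in> fiber M p z" using yZ fiber_iff unfolding y_def by (simp add: add.commute)
    then have s1: "b \<in> Sigma_set M (dil M 1 B) A (fiber M p z)" unfolding Sigma_set_def dil1 using ab by blast
    have "(\<beta> z + a0) mod M \<in> fiber M p z" using a0 zZ fiber_iff by (simp add: add.commute)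
    then have s2: "\<beta> z \<in> Sigma_set M (dil M 1 B) A (fiber M p z)"
      unfolding Sigma_set_def dil1 using a0 \<beta>[OF zZ] by blast
    have "splits_parity M p n (dil M 1 B) A (fiber M p z)" using Q2 u1 zZ unfolding Q2_def by blast
    then show ?thesis using s1 s2 unfolding splits_parity_def q_def y_def z_def by blast
  qed
  show ?thesis
    unfolding cyclotomic_def Q_def[symmetric]
  proof (rule prod_lin_dvd)
    show "finite {k. k < Q \<and> coprime k Q}" by simp
    show "inj_on (\<lambda>k. cis (2 * pi * real k / real Q)) {k. k < Q \<and> coprime k Q}"
    proof (rule inj_onI)
      fix k1 k2 assume k1: "k1 \<in> {k. k < Q \<and> coprime k Q}" and k2: "k2 \<in> {k. k < Q \<and> coprime k Q}"
        and e: "cis (2 * pi * real k1 / real Q) = cis (2 * pi * real k2 / real Q)"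
      have "cis (2 * pi * real k1 / real Q) / cis (2 * pi * real k2 / real Q) = 1" using e by simp
      then have "cis (2 * pi * of_int (int k1 - int k2) / of_int (int Q)) = 1"
        by (simp add: cis_divide diff_divide_distrib right_diff_distrib)
      then have d: "int Q dvd int k1 - int k2" using cis_one_dvd Qq q0 by simp
      show "k1 = k2"
      proof (rule ccontr)
        assume "k1 \<noteq> k2"
        then have "\<bar>int Q\<bar> \<le> \<bar>int k1 - int k2\<bar>" using dvd_imp_le_int[OF _ d] by simp
        moreover have "k1 < Q" "k2 < Q" using k1 k2 by auto
        ultimately show False by linarith
      qed
    qed
    show "\<forall>k\<in>{k. k < Q \<and> coprime k Q}. poly (mask_poly A) (cis (2 * pi * real k / real Q)) = 0"
    proof
      fix k assume k: "k \<in> {k. k < Q \<and> coprime k Q}"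
      have "coprime (int k) (int Q)" using k coprime_int_iff[of k Q] by simp
      then have ck: "coprime (int k) q" using Qq by simp
      define E where "E t = cis (2 * pi * real k * of_int t / of_int q)" for t :: int
      have E_add: "E (t1 + t2) = E t1 * E t2" for t1 t2
        unfolding E_def by (simp add: cis_mult distrib_left add_divide_distrib)
      have E_q: "E t = 1" if "q dvd t" for t
      proof -
        have "q dvd int k * t" using that by simp
        then have "cis (2 * pi * of_int (int k * t) / of_int q) = 1" using dvd_cis_one q0 by blast
        then show ?thesis unfolding E_def by (simp add: mult.assoc)
      qed
      have E_per: "E t1 = E t2" if "q dvd t1 - t2" for t1 t2
      proof -
        have "E t1 = E (t2 + (t1 - t2))" by simp
        also have "\<dots> = E t2 * E (t1 - t2)" by (rule E_add)
        also have "\<dots> = E t2" using E_q[OF that] by simp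
        finally show ?thesis .
      qed
      have E_pow: "E (int j * t) = E t ^ j" for j t
        unfolding E_def by (simp add: DeMoivre mult_ac)
      have Eh: "E h \<noteq> 1"
      proof
        assume "E h = 1"
        then have "cis (2 * pi * of_int (int k * h) / of_int q) = 1" unfolding E_def by (simp add: mult.assoc)
        then have "q dvd int k * h" using cis_one_dvd q0 by blast
        then have "q dvd h" using ck by (simp add: coprime_dvd_mult_right_iff coprime_commute)
        then show False using not_q_h by simp
      qed
      define \<phi> where "\<phi> y = E (y - \<beta> (y mod h))" for y
      have Ea: "E a = \<phi> ((a + b) mod M)" if "a \<in> A" "b \<in> B" for a b
      proof -
        have "q dvd (a + b) - (a + b) mod M" using q_M_dvd[OF mod_minus_dvd[of M "a + b"]]
          by (simp add: dvd_diff_commute)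
        moreover have "q dvd b - \<beta> (((a + b) mod M) mod h)" using qB[OF that] .
        ultimately have "q dvd ((a + b) - (a + b) mod M) - (b - \<beta> (((a + b) mod M) mod h))" by (rule dvd_diff)
        moreover have "((a + b) - (a + b) mod M) - (b - \<beta> (((a + b) mod M) mod h))
            = a - ((a + b) mod M - \<beta> (((a + b) mod M) mod h))" by simp
        ultimately have "q dvd a - ((a + b) mod M - \<beta> (((a + b) mod M) mod h))" by (simp only:)
        then show ?thesis unfolding \<phi>_def by (rule E_per)
      qed
      have sumAB: "(\<Sum>ab\<in>A \<times> B. E (fst ab)) = of_nat (card B) * (\<Sum>a\<in>A. E a)"
      proof -
        have "(\<Sum>ab\<in>A \<times> B. E (fst ab)) = (\<Sum>(a,b)\<in>A \<times> B. E a)"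
          by (simp add: split_beta)
        also have "\<dots> = (\<Sum>a\<in>A. \<Sum>b\<in>B. E a)" by (rule sum.cartesian_product[symmetric])
        also have "\<dots> = (\<Sum>a\<in>A. of_nat (card B) * E a)" by simp
        also have "\<dots> = of_nat (card B) * (\<Sum>a\<in>A. E a)" by (simp add: sum_distrib_left)
        finally show ?thesis .
      qed
      have "(\<Sum>ab\<in>A \<times> B. E (fst ab)) = (\<Sum>ab\<in>A \<times> B. \<phi> ((fst ab + snd ab) mod M))"
        using Ea by (intro sum.cong) auto
      also have "\<dots> = (\<Sum>y\<in>{0..<M}. \<Sum>ab\<in>{ab \<in> A \<times> B. (fst ab + snd ab) mod M = y}. \<phi> ((fst ab + snd ab) mod M))"
        using finA finB M by (intro sum.group[symmetric]) auto
      also have "\<dots> = (\<Sum>y\<in>{0..<M}. \<phi> y)"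
      proof (rule sum.cong[OF refl])
        fix y assume y: "y \<in> {0..<M}"
        have "{ab \<in> A \<times> B. (fst ab + snd ab) mod M = y} = {(a,b)\<in>A\<times>B. (a + 1*b) mod M = y}" by auto
        then have "card {ab \<in> A \<times> B. (fst ab + snd ab) mod M = y} = 1" using T1 y by simp
        moreover have "(\<Sum>ab\<in>{ab \<in> A \<times> B. (fst ab + snd ab) mod M = y}. \<phi> ((fst ab + snd ab) mod M))
            = of_nat (card {ab \<in> A \<times> B. (fst ab + snd ab) mod M = y}) * \<phi> y"
          by (simp add: sum.cong[of _ _ _ "\<lambda>_. \<phi> y"])
        ultimately show "(\<Sum>ab\<in>{ab \<in> A \<times> B. (fst ab + snd ab) mod M = y}. \<phi> ((fst ab + snd ab) mod M)) = \<phi> y"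
          by simp
      qed
      also have "\<dots> = (\<Sum>z\<in>{0..<h}. \<Sum>y\<in>{y\<in>{0..<M}. y mod h = z}. \<phi> y)"
        using h0 by (intro sum.group[symmetric]) auto
      also have "\<dots> = 0"
      proof (rule sum.neutral, rule ballI)
        fix z assume z: "z \<in> {0..<h}"
        define P where "P = nat p"
        have Pp: "int P = p" unfolding P_def using p1 by simp
        have img: "{y\<in>{0..<M}. y mod h = z} = (\<lambda>j. z + int j * h) ` {..<P}"
        proof (intro equalityI subsetI)
          fix y assume y: "y \<in> {y\<in>{0..<M}. y mod h = z}"
          have y0: "0 \<le> y div h" using y h0 by (simp add: pos_imp_zdiv_nonneg_iff)
          have "y div h < p"
          proof -
            have "y < p * h" using y Mph by simp
            moreover have "y div h * h + y mod h = y" by (rule div_mult_mod_eq)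
            moreover have "0 \<le> y mod h" using h0 by simp
            ultimately have "y div h * h < p * h" by linarith
            then show ?thesis using h0 by (simp add: mult_less_cancel_right)
          qed
          then have "nat (y div h) < P" using y0 Pp by linarith
          moreover have "y = z + int (nat (y div h)) * h"
          proof -
            have "y div h * h + y mod h = y" by (rule div_mult_mod_eq)
            then show ?thesis using y y0 by simp
          qed
          ultimately show "y \<in> (\<lambda>j. z + int j * h) ` {..<P}" by blast
        next
          fix y assume "y \<in> (\<lambda>j. z + int j * h) ` {..<P}"
          then obtain j where j: "j < P" "y = z + int j * h" by blast
          have "int j + 1 \<le> p" using j Pp by linarith
          then have "(int j + 1) * h \<le> p * h" using h0 by (intro mult_right_mono) auto
          then have "y < M" using j z Mph by (simp add: algebra_simps)
          moreover have "0 \<le> y" using j z h0 by simp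
          moreover have "y mod h = z" using j z by simp
          ultimately show "y \<in> {y\<in>{0..<M}. y mod h = z}" by simp
        qed
        have inj: "inj_on (\<lambda>j. z + int j * h) {..<P}"
          using h0 by (intro inj_onI) simp
        have "(\<Sum>y\<in>{y\<in>{0..<M}. y mod h = z}. \<phi> y) = (\<Sum>j<P. \<phi> (z + int j * h))"
          unfolding img by (simp add: sum.reindex[OF inj])
        also have "\<dots> = (\<Sum>j<P. E (z - \<beta> z) * E h ^ j)"
        proof (rule sum.cong[OF refl])
          fix j assume "j \<in> {..<P}"
          have "(z + int j * h) mod h = z" using z by simp
          then have "\<phi> (z + int j * h) = E ((z - \<beta> z) + int j * h)" unfolding \<phi>_def by (simp add: algebra_simps)
          also have "\<dots> = E (z - \<beta> z) * E h ^ j" using E_add E_pow by simp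
          finally show "\<phi> (z + int j * h) = E (z - \<beta> z) * E h ^ j" .
        qed
        also have "\<dots> = E (z - \<beta> z) * (\<Sum>j<P. E h ^ j)" by (simp add: sum_distrib_left)
        also have "(\<Sum>j<P. E h ^ j) = 0"
        proof -
          have "E h ^ P = E (int P * h)" using E_pow by simp
          also have "\<dots> = 1" using E_q[OF qM] Pp Mph by simp
          finally have "E h ^ P = 1" .
          then show ?thesis using geometric_sum[OF Eh, of P] by simp
        qed
        finally show "(\<Sum>y\<in>{y\<in>{0..<M}. y mod h = z}. \<phi> y) = 0" by simp
      qed
      finally have "of_nat (card B) * (\<Sum>a\<in>A. E a) = 0" using sumAB by simp
      moreover have "card B \<noteq> 0"
      proof -
        have "0 \<in> ZM M" unfolding ZM_def using M by simp
        then have "B \<noteq> {}" using rep by blast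
        then show ?thesis using finB by simp
      qed
      ultimately have sE: "(\<Sum>a\<in>A. E a) = 0" by simp
      have "poly (mask_poly A) (cis (2 * pi * real k / real Q)) = (\<Sum>a\<in>A. cis (2 * pi * real k / real Q) ^ nat a)"
        unfolding mask_poly_def by (simp add: poly_sum poly_monom)
      also have "\<dots> = (\<Sum>a\<in>A. E a)"
      proof (rule sum.cong[OF refl])
        fix a assume "a \<in> A"
        then have a0: "a \<ge> 0" using AZ unfolding ZM_def by auto
        have rQ: "real Q = real_of_int q" using Qq by (metis of_int_of_nat_eq)
        have "cis (2 * pi * real k / real Q) ^ nat a = cis (real (nat a) * (2 * pi * real k / real Q))"
          by (rule DeMoivre)
        also have "real (nat a) * (2 * pi * real k / real Q) = 2 * pi * real k * of_int a / of_int q"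
          using a0 rQ by simp
        finally show "cis (2 * pi * real k / real Q) ^ nat a = E a" unfolding E_def .
      qed
      finally show "poly (mask_poly A) (cis (2 * pi * real k / real Q)) = 0" using sE by simp
    qed
  qed
qed

end

theorem lemma5p4:
  fixes M p :: int and A B :: "int set"
  assumes "M > 0" and "prime p" and "p dvd M"
    and "tiling M A B"
  defines "n \<equiv> multiplicity p M"
  shows "((cyclotomic (nat (p ^ n)) dvd mask_poly A \<and>
           (\<forall>m. m > 0 \<longrightarrow> p ^ n dvd m \<longrightarrow> m dvd M \<longrightarrow>
                 m \<in> Div M A \<longrightarrow> m div p \<notin> Div M B))
         \<longleftrightarrow>
         (\<forall>r\<in>units_ZM M. \<forall>z\<in>ZM M.
              splits_parity M p n (dil M r B) A (fiber M p z)))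
       \<and>
         ((\<forall>r\<in>units_ZM M. \<forall>z\<in>ZM M.
              splits_parity M p n (dil M r B) A (fiber M p z))
         \<longleftrightarrow>
         (\<forall>a\<in>A. \<forall>b\<in>B. \<forall>x\<in>fiber M p a. A_xy M A B x b \<subseteq> Pi_plane M x (p ^ n)))"
proof -
  interpret ctx2 M p n A B
    using assms by unfold_locales (simp_all add: n_def)
  have e1: "(\<forall>m. m > 0 \<longrightarrow> p ^ n dvd m \<longrightarrow> m dvd M \<longrightarrow>
                 m \<in> Div M A \<longrightarrow> m div p \<notin> Div M B) = D2"
    unfolding D2_def q_def ..
  have e2: "(\<forall>r\<in>units_ZM M. \<forall>z\<in>ZM M.
              splits_parity M p n (dil M r B) A (fiber M p z)) = Q2"
    unfolding Q2_def ..
  have e3: "(\<forall>a\<in>A. \<forall>b\<in>B. \<forall>x\<in>fiber M p a. A_xy M A B x b \<subseteq> Pi_plane M x (p ^ n)) = Q3"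
    unfolding Q3_def q_def ..
  have e4: "nat (p ^ n) = nat q" unfolding q_def ..
  have a1: "Q2 \<Longrightarrow> Q3" by (rule Q2_Q3)
  have a2: "Q3 \<Longrightarrow> Q2" using Q3_K3 K3_Q2 by blast
  have a3: "D2 \<Longrightarrow> Q3" by (rule D2_Q3)
  have a4: "Q3 \<Longrightarrow> D2" by (rule Q3_D2)
  have a5: "Q2 \<Longrightarrow> cyclotomic (nat q) dvd mask_poly A" by (rule cyc_from_Q2)
  show ?thesis unfolding e1 e2 e3 e4 using a1 a2 a3 a4 a5 by blast
qed

end
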